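(* Let $M \ge 3$ and $K \ge 2$ be integers, let $P_{\text{r}} > 0$, and let $\beta_1,\dots,\beta_K > 0$. Let $\mathbf{G} = \mathbf{H}\mathbf{D}^{1/2} \in \mathbb{C}^{M\times K}$, where $\mathbf{H}$ has i.i.d. $\mathcal{CN}(0,1)$ entries and $\mathbf{D} = \mathrm{diag}(\beta_1,\dots,\beta_K)$, and let $\mathbf{g}_i$ denote the $i$-th column of $\mathbf{G}$. For an integer $a$ and $t \in \{1,\dots,K-1\}$, let $j(a,t)$ be the unique element of $\{1,\dots,K\}$ congruent to $a+t$ modulo $K$. For $k \in \{1,\dots,K\}$ and $t \in \{1,\dots,K-1\}$, let $\mathcal{S}_{k,t} = \{ i \in \{1,\dots,K\} : j(i,t) \neq j(k,t) \text{ and } j(i,t) \neq j(k-t,t)\}$ and define $$\mathtt{R}^{\mathrm{dl},(t)}_{k} = \mathbb{E}\left\{\log_2\left(1 + \frac{\frac{P_{\text{r}}}{M\sum_{i=1}^K \beta_i}\|\mathbf{g}_k\|^4}{\frac{P_{\text{r}}}{M\sum_{i=1}^K \beta_i}\sum_{i\in\mathcal{S}_{k,t}} |\mathbf{g}_k^H\mathbf{g}_i|^2 + 1}\right)\right\},$$ the expectation being over $\mathbf{G}$. Then $$\mathtt{R}^{\mathrm{dl},(t)}_{k} \ \ge\ \log_2\left(1 + \frac{P_{\text{r}}(M-1)(M-2)\beta_k^2}{P_{\text{r}}(M-2)\beta_k\sum_{i\in\mathcal{S}_{k,t}}\beta_i + M\sum_{i=1}^K\beta_i}\right).$$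
   Context: Model: a decode-and-forward multi-way relay with an $M$-antenna relay and $K$ single-antenna users; $\mathbf{G}$ is the user–relay channel, with small-scale fading $\mathbf{H}$ and large-scale fading coefficients $\beta_k$; $P_{\text{r}}$ is the normalized relay transmit power; the quantity $\mathtt{R}^{\mathrm{dl},(t)}_{k}$ is the downlink spectral efficiency of user $k$ in broadcast time-slot $t$ of the conventional protocol, where the relay sends $x_{j(k,t)}$ to user $k$ and user $k$ has removed its own symbol $x_k = x_{j(k-t,t)}$. Note $j(k-t,t)=k$. *)

theory Defs
  imports "HOL-Probability.Probability"
begin

text \<open>Circularly-symmetric complex Gaussian CN(0,1): real and imaginary parts
  independent real normals with mean 0 and variance 1/2 (std. deviation sqrt(1/2)).\<close>
definition CN01 :: "complex measure" where
  "CN01 = distr (density lborel (normal_density 0 (sqrt (1/2))) \<Otimes>\<^sub>M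
                 density lborel (normal_density 0 (sqrt (1/2))))
               borel (\<lambda>(x, y). Complex x y)"

text \<open>Law of the small-scale fading matrix H (entries indexed by antenna m in 1..M and
  user i in 1..K), i.i.d. CN(0,1).\<close>
definition channel_measure :: "nat \<Rightarrow> nat \<Rightarrow> (nat \<times> nat \<Rightarrow> complex) measure" where
  "channel_measure M K = PiM ({1..M} \<times> {1..K}) (\<lambda>_. CN01)"

definition gcol :: "(nat \<Rightarrow> real) \<Rightarrow> (nat \<times> nat \<Rightarrow> complex) \<Rightarrow> nat \<Rightarrow> nat \<Rightarrow> complex" where
  "gcol \<beta> H i m = H (m, i) * complex_of_real (sqrt (\<beta> i))"

definition gnorm2 :: "nat \<Rightarrow> (nat \<Rightarrow> real) \<Rightarrow> (nat \<times> nat \<Rightarrow> complex) \<Rightarrow> nat \<Rightarrow> real" where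
  "gnorm2 M \<beta> H i = (\<Sum>m = 1..M. (cmod (gcol \<beta> H i m))\<^sup>2)"

definition ginner :: "nat \<Rightarrow> (nat \<Rightarrow> real) \<Rightarrow> (nat \<times> nat \<Rightarrow> complex) \<Rightarrow> nat \<Rightarrow> nat \<Rightarrow> complex" where
  "ginner M \<beta> H k i = (\<Sum>m = 1..M. cnj (gcol \<beta> H k m) * gcol \<beta> H i m)"

definition jidx :: "nat \<Rightarrow> int \<Rightarrow> nat \<Rightarrow> int" where
  "jidx K a t = (a + int t - 1) mod int K + 1"

definition Sset :: "nat \<Rightarrow> nat \<Rightarrow> nat \<Rightarrow> nat set" where
  "Sset K k t = {i \<in> {1..K}. jidx K (int i) t \<noteq> jidx K (int k) t
                               \<and> jidx K (int i) t \<noteq> jidx K (int k - int t) t}"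

definition Rdl :: "nat \<Rightarrow> nat \<Rightarrow> real \<Rightarrow> (nat \<Rightarrow> real) \<Rightarrow> nat \<Rightarrow> nat \<Rightarrow> real" where
  "Rdl M K Pr \<beta> k t =
     (let \<rho> = Pr / (real M * (\<Sum>i = 1..K. \<beta> i)) in
      \<integral>H. log 2 (1 + (\<rho> * (gnorm2 M \<beta> H k)\<^sup>2) /
                     (\<rho> * (\<Sum>i\<in>Sset K k t. (cmod (ginner M \<beta> H k i))\<^sup>2) + 1))
        \<partial>channel_measure M K)"

end

theory Submission
  imports Defs "HOL-Real_Asymp.Real_Asymp"
begin


definition nu :: "real measure" where "nu = density lborel (normal_density 0 (sqrt (1/2)))"

lemma nu_prob: "prob_space nu"
  unfolding nu_def by (rule prob_space_normal_density) simp

lemma nd_half: "normal_density 0 (sqrt (1/2)) x = exp (- x\<^sup>2) / sqrt pi"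
  by (simp add: normal_density_def)

lemma nd_scale:
  assumes "s \<ge> 0"
  shows "normal_density 0 (sqrt (1/2)) x * exp (- (s * x\<^sup>2)) =
         normal_density 0 (sqrt (1/(2*(1+s)))) x / sqrt (1+s)"
proof -
  have c: "sqrt (2 * pi * (sqrt (1 / (2 * (1 + s))))\<^sup>2) = sqrt pi / sqrt (1+s)"
  proof -
    have "2 * pi * (sqrt (1 / (2 * (1 + s))))\<^sup>2 = pi / (1+s)"
      using assms by (simp add: field_simps)
    then show ?thesis using assms by (simp add: real_sqrt_divide)
  qed
  have q: "2 * (sqrt (1 / (2 * (1 + s))))\<^sup>2 = 1 / (1 + s)"
    using assms by (simp add: divide_simps)
  have e: "- (x - 0)\<^sup>2 / (2 * (sqrt (1 / (2 * (1 + s))))\<^sup>2) = - x\<^sup>2 + - (s * x\<^sup>2)"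
    unfolding q using assms by (simp add: algebra_simps)
  have "normal_density 0 (sqrt (1/(2*(1+s)))) x / sqrt (1+s) =
        exp (- x\<^sup>2 + - (s * x\<^sup>2)) / sqrt pi"
    unfolding normal_density_def c e using assms by simp
  also have "\<dots> = normal_density 0 (sqrt (1/2)) x * exp (- (s * x\<^sup>2))"
    by (simp add: nd_half exp_add[symmetric])
  finally show ?thesis ..
qed

lemma R0: assumes "s \<ge> 0"
  shows "integrable nu (\<lambda>x. exp (- (s * x\<^sup>2)))" "(\<integral>x. exp (- (s * x\<^sup>2)) \<partial>nu) = 1 / sqrt (1+s)"
proof -
  have "integrable lborel (\<lambda>x. normal_density 0 (sqrt (1/(2*(1+s)))) x / sqrt (1+s))"
    using assms by (intro integrable_divide) simp
  then show "integrable nu (\<lambda>x. exp (- (s * x\<^sup>2)))"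
    unfolding nu_def using assms
    by (subst integrable_density) (auto simp: normal_density_nonneg nd_scale)
  have "(\<integral>x. exp (- (s * x\<^sup>2)) \<partial>nu) = (\<integral>x. normal_density 0 (sqrt (1/(2*(1+s)))) x / sqrt (1+s) \<partial>lborel)"
    unfolding nu_def using assms
    by (subst integral_density) (auto simp: normal_density_nonneg nd_scale)
  also have "\<dots> = (\<integral>x. normal_density 0 (sqrt (1/(2*(1+s)))) x \<partial>lborel) / sqrt (1+s)"
    by (rule integral_divide_zero)
  also have "\<dots> = 1 / sqrt (1+s)" using assms by (subst integral_normal_density) auto
  finally show "(\<integral>x. exp (- (s * x\<^sup>2)) \<partial>nu) = 1 / sqrt (1+s)" .
qed

lemma R2: assumes "s \<ge> 0"
  shows "integrable nu (\<lambda>x. x\<^sup>2 * exp (- (s * x\<^sup>2)))"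
        "(\<integral>x. x\<^sup>2 * exp (- (s * x\<^sup>2)) \<partial>nu) = 1 / (2 * (1+s) * sqrt (1+s))"
proof -
  let ?s = "sqrt (1/(2*(1+s)))"
  have pos: "?s > 0" using assms by simp
  have i: "integrable lborel (\<lambda>x. normal_density 0 ?s x * (x - 0) ^ (2*1))"
    using integrable_normal_moment[OF pos] by blast
  have e: "(\<integral>x. normal_density 0 ?s x * (x - 0) ^ (2*1) \<partial>lborel) = ?s\<^sup>2"
    using integral_normal_moment_even[OF pos, of 0 1] by simp
  have eq: "\<And>x. normal_density 0 (sqrt (1/2)) x * (x\<^sup>2 * exp (- (s * x\<^sup>2))) =
     (normal_density 0 ?s x * (x - 0) ^ (2*1)) / sqrt (1+s)"
  proof -
    fix x
    have "normal_density 0 (sqrt (1/2)) x * (x\<^sup>2 * exp (- (s * x\<^sup>2))) =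
      x\<^sup>2 * (normal_density 0 (sqrt (1/2)) x * exp (- (s * x\<^sup>2)))" by (simp only: mult.left_commute)
    also have "\<dots> = x\<^sup>2 * (normal_density 0 ?s x / sqrt (1+s))" by (simp only: nd_scale[OF assms])
    also have "\<dots> = (normal_density 0 ?s x * (x - 0) ^ (2*1)) / sqrt (1+s)" by simp
    finally show "normal_density 0 (sqrt (1/2)) x * (x\<^sup>2 * exp (- (s * x\<^sup>2))) =
     (normal_density 0 ?s x * (x - 0) ^ (2*1)) / sqrt (1+s)" .
  qed
  show "integrable nu (\<lambda>x. x\<^sup>2 * exp (- (s * x\<^sup>2)))"
    unfolding nu_def using assms i
    by (subst integrable_density) (auto simp: normal_density_nonneg eq)
  have "(\<integral>x. x\<^sup>2 * exp (- (s * x\<^sup>2)) \<partial>nu) = (\<integral>x. (normal_density 0 ?s x * (x - 0) ^ (2*1)) / sqrt (1+s) \<partial>lborel)"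
    unfolding nu_def using assms
    by (subst integral_density) (auto simp: normal_density_nonneg eq)
  also have "\<dots> = ?s\<^sup>2 / sqrt (1+s)" by (simp only: integral_divide_zero e)
  also have "\<dots> = 1 / (2 * (1+s) * sqrt (1+s))" using assms by simp
  finally show "(\<integral>x. x\<^sup>2 * exp (- (s * x\<^sup>2)) \<partial>nu) = 1 / (2 * (1+s) * sqrt (1+s))" .
qed

lemma R1: "integrable nu (\<lambda>x. x)" "(\<integral>x. x \<partial>nu) = 0"
proof -
  have pos: "sqrt (1/2::real) > 0" by simp
  show "integrable nu (\<lambda>x. x)"
    unfolding nu_def using integrable_normal_moment_nz_1[OF pos, of 0]
    by (subst integrable_density) (auto simp: normal_density_nonneg)
  show "(\<integral>x. x \<partial>nu) = 0"
    unfolding nu_def using integral_normal_moment_nz_1[OF pos, of 0]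
    by (subst integral_density) (auto simp: normal_density_nonneg)
qed


abbreviation PP :: "(real \<times> real) measure" where "PP \<equiv> nu \<Otimes>\<^sub>M nu"

lemma PP_prob: "pair_prob_space nu nu"
  by (simp add: nu_prob pair_prob_space.intro pair_sigma_finite_def prob_space_imp_sigma_finite)

lemma sets_nu[measurable_cong]: "sets nu = sets borel"
  by (simp add: nu_def)

lemma ar1: "(a::real) > 0 \<Longrightarrow> r > 0 \<Longrightarrow> 2*(1/(2*a*r)*(1/r)) = 1/(a*(r*r))"
  by (simp add: field_simps)

lemma pair_mult:
  fixes g h :: "real \<Rightarrow> real"
  assumes g: "integrable nu g" and h: "integrable nu h"
  shows "integrable PP (\<lambda>p. g (fst p) * h (snd p))"
        "(\<integral>p. g (fst p) * h (snd p) \<partial>PP) = (\<integral>x. g x \<partial>nu) * (\<integral>x. h x \<partial>nu)"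
proof -
  interpret pair_prob_space nu nu by (rule PP_prob)
  have gm[measurable]: "g \<in> borel_measurable nu" using g by auto
  have hm[measurable]: "h \<in> borel_measurable nu" using h by auto
  have m: "(\<lambda>p. g (fst p) * h (snd p)) \<in> borel_measurable PP" by measurable
  show i: "integrable PP (\<lambda>p. g (fst p) * h (snd p))"
  proof (rule Fubini_integrable[OF m])
    have "integrable nu (\<lambda>x. norm (g x) * (\<integral>y. norm (h y) \<partial>nu))"
      using g by (intro integrable_mult_left) auto
    then show "integrable nu (\<lambda>x. \<integral>y. norm (g (fst (x, y)) * h (snd (x, y))) \<partial>nu)"
      by (simp add: abs_mult)
    show "AE x in nu. integrable nu (\<lambda>y. g (fst (x, y)) * h (snd (x, y)))"
      using h by auto
  qed
  have "(\<integral>p. g (fst p) * h (snd p) \<partial>PP) = (\<integral>x. (\<integral>y. g x * h y \<partial>nu) \<partial>nu)"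
    using integral_fst'[OF i] by simp
  also have "\<dots> = (\<integral>x. g x * (\<integral>y. h y \<partial>nu) \<partial>nu)" by simp
  also have "\<dots> = (\<integral>x. g x \<partial>nu) * (\<integral>x. h x \<partial>nu)" by simp
  finally show "(\<integral>p. g (fst p) * h (snd p) \<partial>PP) = (\<integral>x. g x \<partial>nu) * (\<integral>x. h x \<partial>nu)" .
qed

lemma CN01_alt: "CN01 = distr PP borel (\<lambda>p. Complex (fst p) (snd p))"
  unfolding CN01_def nu_def by (simp add: case_prod_beta')

lemma Cmeas[measurable]: "(\<lambda>p. Complex (fst p) (snd p)) \<in> measurable PP borel"
  unfolding Complex_eq by measurable

lemma CN01_prob: "prob_space CN01"
proof -
  interpret pair_prob_space nu nu by (rule PP_prob)
  show ?thesis unfolding CN01_alt by (rule prob_space_distr) measurable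
qed

lemma sets_CN01[measurable_cong]: "sets CN01 = sets borel"
  unfolding CN01_alt by simp

lemma CN_integrable_iff:
  fixes f :: "complex \<Rightarrow> 'b::{banach, second_countable_topology}"
  assumes [measurable]: "f \<in> borel_measurable borel"
  shows "integrable CN01 f \<longleftrightarrow> integrable PP (\<lambda>p. f (Complex (fst p) (snd p)))"
  unfolding CN01_alt by (rule integrable_distr_eq) measurable

lemma CN_integral:
  fixes f :: "complex \<Rightarrow> 'b::{banach, second_countable_topology}"
  assumes [measurable]: "f \<in> borel_measurable borel"
  shows "integral\<^sup>L CN01 f = (\<integral>p. f (Complex (fst p) (snd p)) \<partial>PP)"
  unfolding CN01_alt by (rule integral_distr) measurable

lemma C0: assumes s: "s \<ge> 0"
  shows "integrable CN01 (\<lambda>z. exp (- (s * (cmod z)\<^sup>2)))"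
        "(\<integral>z. exp (- (s * (cmod z)\<^sup>2)) \<partial>CN01) = 1 / (1+s)"
proof -
  have eq: "\<And>p. exp (- (s * (cmod (Complex (fst p) (snd p)))\<^sup>2)) =
       exp (- (s * (fst p)\<^sup>2)) * exp (- (s * (snd p)\<^sup>2))"
    by (simp add: cmod_power2 exp_add[symmetric] algebra_simps)
  show "integrable CN01 (\<lambda>z. exp (- (s * (cmod z)\<^sup>2)))"
    by (subst CN_integrable_iff, measurable) (auto simp: eq intro!: pair_mult R0 s)
  have "(\<integral>z. exp (- (s * (cmod z)\<^sup>2)) \<partial>CN01) =
     (\<integral>p. exp (- (s * (fst p)\<^sup>2)) * exp (- (s * (snd p)\<^sup>2)) \<partial>PP)"
    by (subst CN_integral, measurable) (simp only: eq)
  also have "\<dots> = (1 / sqrt (1+s)) * (1 / sqrt (1+s))"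
    using pair_mult(2)[OF R0(1)[OF s] R0(1)[OF s]] R0(2)[OF s] by simp
  also have "\<dots> = 1 / (1+s)" using s by (simp add: real_sqrt_mult[symmetric])
  finally show "(\<integral>z. exp (- (s * (cmod z)\<^sup>2)) \<partial>CN01) = 1 / (1+s)" .
qed

lemma C2: assumes s: "s \<ge> 0"
  shows "integrable CN01 (\<lambda>z. (cmod z)\<^sup>2 * exp (- (s * (cmod z)\<^sup>2)))"
        "(\<integral>z. (cmod z)\<^sup>2 * exp (- (s * (cmod z)\<^sup>2)) \<partial>CN01) = 1 / (1+s)\<^sup>2"
proof -
  have eq: "\<And>p. (cmod (Complex (fst p) (snd p)))\<^sup>2 * exp (- (s * (cmod (Complex (fst p) (snd p)))\<^sup>2)) =
       ((fst p)\<^sup>2 * exp (- (s * (fst p)\<^sup>2))) * exp (- (s * (snd p)\<^sup>2)) +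
       exp (- (s * (fst p)\<^sup>2)) * ((snd p)\<^sup>2 * exp (- (s * (snd p)\<^sup>2)))"
    by (simp add: cmod_power2 exp_add[symmetric] algebra_simps)
  have i1: "integrable PP (\<lambda>p. ((fst p)\<^sup>2 * exp (- (s * (fst p)\<^sup>2))) * exp (- (s * (snd p)\<^sup>2)))"
    by (intro pair_mult R0 R2 s)
  have i2: "integrable PP (\<lambda>p. exp (- (s * (fst p)\<^sup>2)) * ((snd p)\<^sup>2 * exp (- (s * (snd p)\<^sup>2))))"
    by (intro pair_mult R0 R2 s)
  show "integrable CN01 (\<lambda>z. (cmod z)\<^sup>2 * exp (- (s * (cmod z)\<^sup>2)))"
    by (subst CN_integrable_iff, measurable) (auto simp only: eq intro!: Bochner_Integration.integrable_add i1 i2)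
  have "(\<integral>z. (cmod z)\<^sup>2 * exp (- (s * (cmod z)\<^sup>2)) \<partial>CN01) =
     (\<integral>p. ((fst p)\<^sup>2 * exp (- (s * (fst p)\<^sup>2))) * exp (- (s * (snd p)\<^sup>2)) \<partial>PP) +
     (\<integral>p. exp (- (s * (fst p)\<^sup>2)) * ((snd p)\<^sup>2 * exp (- (s * (snd p)\<^sup>2))) \<partial>PP)"
    by (subst CN_integral, measurable) (auto simp only: eq intro!: Bochner_Integration.integral_add i1 i2)
  also have "\<dots> = 2 * (1 / (2 * (1+s) * sqrt (1+s)) * (1 / sqrt (1+s)))"
    using pair_mult(2)[OF R2(1)[OF s] R0(1)[OF s]] pair_mult(2)[OF R0(1)[OF s] R2(1)[OF s]] R0(2)[OF s] R2(2)[OF s]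
    by simp
  also have "\<dots> = 1 / (1+s)\<^sup>2"
  proof -
    have e: "sqrt (1+s) * sqrt (1+s) = 1+s" using s by simp
    show ?thesis using ar1[of "1+s" "sqrt (1+s)"] s unfolding e by (simp add: power2_eq_square)
  qed
  finally show "(\<integral>z. (cmod z)\<^sup>2 * exp (- (s * (cmod z)\<^sup>2)) \<partial>CN01) = 1 / (1+s)\<^sup>2" .
qed

lemma C1: "integrable CN01 (\<lambda>z. z)" "(\<integral>z. z \<partial>CN01) = 0"
proof -
  interpret pair_prob_space nu nu by (rule PP_prob)
  have eq: "\<And>p. Complex (fst p) (snd p) = complex_of_real (fst p * 1) + \<i> * complex_of_real (1 * snd p)"
    by (simp add: Complex_eq)
  have i1: "integrable PP (\<lambda>p. fst p * 1)" by (intro pair_mult R1) simp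
  have i2: "integrable PP (\<lambda>p. 1 * snd p)" by (intro pair_mult R1) simp
  show "integrable CN01 (\<lambda>z. z)"
    by (subst CN_integrable_iff, measurable) (auto simp only: eq intro!: Bochner_Integration.integrable_add integrable_mult_right integrable_of_real i1 i2)
  have "(\<integral>z. z \<partial>CN01) = complex_of_real (\<integral>p. fst p * 1 \<partial>PP) + \<i> * complex_of_real (\<integral>p. 1 * snd p \<partial>PP)"
    by (subst CN_integral, measurable) (auto simp only: eq Bochner_Integration.integral_add integrable_mult_right integrable_of_real i1 i2 integral_mult_right_zero integral_complex_of_real)
  also have "\<dots> = 0"
    using pair_mult(2)[OF R1(1) M1.integrable_const[of 1]]
          pair_mult(2)[OF M1.integrable_const[of 1] R1(1)]
    by (simp add: R1)
  finally show "(\<integral>z. z \<partial>CN01) = 0" .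
qed

lemma CN_integrable_bound:
  fixes f :: "complex \<Rightarrow> complex"
  assumes [measurable]: "f \<in> borel_measurable borel" and b: "\<And>z. norm (f z) \<le> C * (1 + (cmod z)\<^sup>2)"
  shows "integrable CN01 f"
proof (rule Bochner_Integration.integrable_bound)
  interpret prob_space CN01 by (rule CN01_prob)
  show "integrable CN01 (\<lambda>z. C * (1 + (cmod z)\<^sup>2))"
    using C2(1)[of 0] by (intro integrable_mult_right Bochner_Integration.integrable_add) auto
  show "f \<in> borel_measurable CN01" by measurable
  show "AE x in CN01. norm (f x) \<le> norm (C * (1 + (cmod x)\<^sup>2))"
    using b by (auto intro!: AE_I2 order_trans[OF b] simp: abs_le_iff)
qed


lemma PiCN:
  fixes f :: "'i \<Rightarrow> complex \<Rightarrow> complex"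
  assumes "finite I" "\<And>p. p \<in> I \<Longrightarrow> integrable CN01 (f p)"
  shows "integrable (PiM I (\<lambda>_. CN01)) (\<lambda>H. \<Prod>p\<in>I. f p (H p))"
        "(\<integral>H. (\<Prod>p\<in>I. f p (H p)) \<partial>PiM I (\<lambda>_. CN01)) = (\<Prod>p\<in>I. \<integral>z. f p z \<partial>CN01)"
proof -
  interpret product_sigma_finite "\<lambda>_. CN01"
    by (simp add: product_sigma_finite_def CN01_prob prob_space_imp_sigma_finite)
  show "integrable (PiM I (\<lambda>_. CN01)) (\<lambda>H. \<Prod>p\<in>I. f p (H p))"
    by (rule product_integrable_prod) (use assms in auto)
  show "(\<integral>H. (\<Prod>p\<in>I. f p (H p)) \<partial>PiM I (\<lambda>_. CN01)) = (\<Prod>p\<in>I. \<integral>z. f p z \<partial>CN01)"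
    by (rule product_integral_prod) (use assms in auto)
qed

lemma prod_AB: "(\<Prod>p\<in>A\<times>B. g p) = (\<Prod>a\<in>A. \<Prod>b\<in>B. g (a,b))"
  by (simp add: prod.cartesian_product)

lemma prod_two:
  assumes "finite J" "k \<in> J" "i \<in> J" "k \<noteq> i"
  shows "(\<Prod>j\<in>J. if j = k then a else if j = i then b else 1) = (a::'a::comm_monoid_mult) * b"
proof -
  have "(\<Prod>j\<in>J. if j = k then a else if j = i then b else 1) =
        (\<Prod>j\<in>J. (if j = k then a else 1) * (if j = i then b else 1))"
    by (rule prod.cong) (use assms in auto)
  also have "\<dots> = a * b" using assms by (simp add: prod.distrib)
  finally show ?thesis .
qed

lemma prod_one_other:
  assumes "finite A" "m0 \<in> A"
  shows "(\<Prod>m\<in>A. if m = m0 then a else b) = (a::'a::comm_monoid_mult) * b ^ (card A - 1)"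
proof -
  have "(\<Prod>m\<in>A. if m = m0 then a else b) = (if m0 = m0 then a else b) * (\<Prod>m\<in>A - {m0}. if m = m0 then a else b)"
    using assms by (rule prod.remove)
  also have "(\<Prod>m\<in>A - {m0}. if m = m0 then a else b) = (\<Prod>m\<in>A - {m0}. b)"
    by (rule prod.cong) auto
  finally show ?thesis using assms by (simp add: card_Diff_singleton)
qed

definition ee :: "real \<Rightarrow> complex \<Rightarrow> complex" where
  "ee s z = complex_of_real (exp (- (s * (cmod z)\<^sup>2)))"

definition psi0 :: "real \<Rightarrow> nat \<Rightarrow> nat \<times> nat \<Rightarrow> complex \<Rightarrow> complex" where
  "psi0 s k p z = (if snd p = k then ee s z else 1)"

definition psi :: "real \<Rightarrow> nat \<Rightarrow> nat \<Rightarrow> nat \<Rightarrow> nat \<Rightarrow> nat \<times> nat \<Rightarrow> complex \<Rightarrow> complex" where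
  "psi s k i m0 m1 p z =
     (if snd p = k then ee s z * (if fst p = m0 then cnj z else 1) * (if fst p = m1 then z else 1)
      else if snd p = i then (if fst p = m0 then z else 1) * (if fst p = m1 then cnj z else 1) else 1)"

definition WW :: "nat \<Rightarrow> nat \<Rightarrow> (nat \<times> nat \<Rightarrow> complex) \<Rightarrow> real" where
  "WW M k H = (\<Sum>m = 1..M. (cmod (H (m, k)))\<^sup>2)"

definition AA :: "nat \<Rightarrow> nat \<Rightarrow> nat \<Rightarrow> (nat \<times> nat \<Rightarrow> complex) \<Rightarrow> complex" where
  "AA M k i H = (\<Sum>m = 1..M. cnj (H (m, k)) * H (m, i))"

lemma ee_meas[measurable]: "ee s \<in> borel_measurable borel"
  unfolding ee_def by measurable

lemma cnj_meas[measurable]: "cnj \<in> borel_measurable borel"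
  by (intro borel_measurable_continuous_onI continuous_intros)

lemma if_meas[measurable (raw)]:
  "f \<in> borel_measurable M \<Longrightarrow> g \<in> borel_measurable M \<Longrightarrow> (\<lambda>x. if c then f x else g x) \<in> borel_measurable M"
  by (cases c) simp_all

lemma norm_ee: "s \<ge> 0 \<Longrightarrow> norm (ee s z) \<le> 1"
  unfolding ee_def by simp

lemma bnd3:
  fixes c a b :: complex
  assumes "norm c \<le> 1" "norm a \<le> max 1 (cmod z)" "norm b \<le> max 1 (cmod z)"
  shows "norm (c * a * b) \<le> 1 * (1 + (cmod z)\<^sup>2)"
proof -
  have "norm (c * a * b) \<le> 1 * max 1 (cmod z) * max 1 (cmod z)"
    unfolding norm_mult using assms by (intro mult_mono) auto
  also have "\<dots> \<le> 1 + (cmod z)\<^sup>2"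
    by (auto simp: max_def power2_eq_square)
  finally show ?thesis by simp
qed

lemma psi0_int: "s \<ge> 0 \<Longrightarrow> integrable CN01 (psi0 s k p)"
  unfolding psi0_def
  by (rule CN_integrable_bound[where C=1]) (auto intro: order_trans[OF norm_ee])

lemma psi_int: "s \<ge> 0 \<Longrightarrow> integrable CN01 (psi s k i m0 m1 p)"
  unfolding psi_def
proof (rule CN_integrable_bound[where C=1])
  fix z assume s: "s \<ge> 0"
  show "norm (if snd p = k then ee s z * (if fst p = m0 then cnj z else 1) * (if fst p = m1 then z else 1)
      else if snd p = i then (if fst p = m0 then z else 1) * (if fst p = m1 then cnj z else 1) else 1)
      \<le> 1 * (1 + (cmod z)\<^sup>2)"
  proof -
    have n: "norm (if P then w else 1) \<le> max 1 (cmod z)" if "w = z \<or> w = cnj z" for P w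
      using that by auto
    have a: "norm (ee s z * (if fst p = m0 then cnj z else 1) * (if fst p = m1 then z else 1)) \<le> 1 * (1 + (cmod z)\<^sup>2)"
      by (intro bnd3 norm_ee s n) auto
    have b: "norm (1 * (if fst p = m0 then z else 1) * (if fst p = m1 then cnj z else 1)) \<le> 1 * (1 + (cmod z)\<^sup>2)"
      by (intro bnd3 n) auto
    show ?thesis using a b by (auto simp: add_increasing)
  qed
qed measurable

lemma P0_point:
  assumes "k \<in> {1..K}"
  shows "(\<Prod>p\<in>{1..M}\<times>{1..K}. psi0 s k p (H p)) = complex_of_real (exp (- (s * WW M k H)))"
proof -
  have "(\<Prod>p\<in>{1..M}\<times>{1..K}. psi0 s k p (H p)) = (\<Prod>m\<in>{1..M}. \<Prod>j\<in>{1..K}. if j = k then ee s (H (m,j)) else 1)"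
    by (simp add: prod_AB psi0_def)
  also have "\<dots> = (\<Prod>m\<in>{1..M}. ee s (H (m,k)))"
    using assms by (simp add: if_distrib cong: if_cong)
  also have "\<dots> = complex_of_real (\<Prod>m\<in>{1..M}. exp (- (s * (cmod (H (m,k)))\<^sup>2)))"
    by (simp add: ee_def)
  also have "(\<Prod>m\<in>{1..M}. exp (- (s * (cmod (H (m,k)))\<^sup>2))) = exp (- (s * WW M k H))"
    by (simp add: WW_def exp_sum[symmetric] sum_distrib_left sum_negf)
  finally show ?thesis .
qed

lemma P_point:
  assumes "k \<in> {1..K}" "i \<in> {1..K}" "k \<noteq> i" "m0 \<in> {1..M}" "m1 \<in> {1..M}"
  shows "(\<Prod>p\<in>{1..M}\<times>{1..K}. psi s k i m0 m1 p (H p)) =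
     complex_of_real (exp (- (s * WW M k H))) * (cnj (H (m0,k)) * H (m0,i)) * (H (m1,k) * cnj (H (m1,i)))"
proof -
  have "(\<Prod>p\<in>{1..M}\<times>{1..K}. psi s k i m0 m1 p (H p)) =
    (\<Prod>m\<in>{1..M}. \<Prod>j\<in>{1..K}. if j = k then psi s k i m0 m1 (m,k) (H (m,k))
        else if j = i then psi s k i m0 m1 (m,i) (H (m,i)) else 1)"
    unfolding prod_AB by (intro prod.cong refl) (auto simp: psi_def)
  also have "\<dots> = (\<Prod>m\<in>{1..M}. psi s k i m0 m1 (m,k) (H (m,k)) * psi s k i m0 m1 (m,i) (H (m,i)))"
    using assms by (simp add: prod_two)
  also have "\<dots> = (\<Prod>m\<in>{1..M}. ee s (H (m,k)) * ((if m = m0 then cnj (H (m,k)) else 1) * (if m = m1 then H (m,k) else 1) *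
        (if m = m0 then H (m,i) else 1) * (if m = m1 then cnj (H (m,i)) else 1)))"
    using assms by (intro prod.cong refl) (auto simp: psi_def)
  also have "\<dots> = (\<Prod>m\<in>{1..M}. ee s (H (m,k))) * (cnj (H (m0,k)) * H (m1,k) * H (m0,i) * cnj (H (m1,i)))"
    using assms by (simp add: prod.distrib)
  also have "(\<Prod>m\<in>{1..M}. ee s (H (m,k))) = complex_of_real (\<Prod>m\<in>{1..M}. exp (- (s * (cmod (H (m,k)))\<^sup>2)))"
    unfolding ee_def by (rule of_real_prod[symmetric])
  also have "(\<Prod>m\<in>{1..M}. exp (- (s * (cmod (H (m,k)))\<^sup>2))) = exp (- (s * WW M k H))"
    by (simp add: WW_def exp_sum[symmetric] sum_distrib_left sum_negf)
  finally show ?thesis by (simp add: ac_simps)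
qed

lemma int_ee: "s \<ge> 0 \<Longrightarrow> (\<integral>z. ee s z \<partial>CN01) = complex_of_real (1 / (1+s))"
  unfolding ee_def using C0 by simp

lemma int_ee2: "s \<ge> 0 \<Longrightarrow> (\<integral>z. ee s z * cnj z * z \<partial>CN01) = complex_of_real (1 / (1+s)\<^sup>2)"
proof -
  assume s: "s \<ge> 0"
  have "\<And>z. ee s z * cnj z * z = complex_of_real ((cmod z)\<^sup>2 * exp (- (s * (cmod z)\<^sup>2)))"
  proof -
    fix z
    have "ee s z * cnj z * z = complex_of_real (exp (- (s * (cmod z)\<^sup>2))) * (z * cnj z)"
      by (simp add: ee_def ac_simps)
    also have "z * cnj z = complex_of_real ((cmod z)\<^sup>2)" by (rule complex_norm_square[symmetric])
    finally show "ee s z * cnj z * z = complex_of_real ((cmod z)\<^sup>2 * exp (- (s * (cmod z)\<^sup>2)))"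
      by (simp only: of_real_mult mult.commute)
  qed
  then have eq: "(\<lambda>z. ee s z * cnj z * z) = (\<lambda>z. complex_of_real ((cmod z)\<^sup>2 * exp (- (s * (cmod z)\<^sup>2))))"
    by (rule ext)
  show ?thesis by (simp only: eq integral_complex_of_real C2(2)[OF s])
qed

lemma int_z: "(\<integral>z. z \<partial>CN01) = 0" using C1 by simp

lemma int_zz: "(\<integral>z. z * cnj z \<partial>CN01) = 1"
proof -
  have e1: "(\<integral>z. (cmod z)\<^sup>2 \<partial>CN01) = 1" using C2(2)[of 0] by simp
  have eq: "(\<lambda>z. z * cnj z) = (\<lambda>z. complex_of_real ((cmod z)\<^sup>2))"
    by (rule ext) (rule complex_norm_square[symmetric])
  show ?thesis by (simp only: eq integral_complex_of_real e1) simp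
qed

lemma CN_one: "measure CN01 (space CN01) = 1"
  using prob_space.prob_space[OF CN01_prob] .

lemma int_one: "(\<integral>z. (1::complex) \<partial>CN01) = 1"
proof -
  interpret prob_space CN01 by (rule CN01_prob)
  show ?thesis by (simp add: prob_space)
qed

lemma int_psi0: "s \<ge> 0 \<Longrightarrow> (\<integral>z. psi0 s k (m,j) z \<partial>CN01) = (if j = k then complex_of_real (1 / (1+s)) else 1)"
proof (cases "j = k")
  case True
  assume s: "s \<ge> 0"
  have "psi0 s k (m,j) = ee s" using True by (auto simp: psi0_def)
  then show ?thesis using True s int_ee by simp
next
  case False
  have "psi0 s k (m,j) = (\<lambda>_. 1)" using False by (auto simp: psi0_def)
  then show ?thesis using False int_one by simp
qed

lemma psi_fun: "psi s k i m0 m1 (m,j) = (\<lambda>z. if j = k then ee s z * (if m = m0 then cnj z else 1) * (if m = m1 then z else 1)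
      else if j = i then (if m = m0 then z else 1) * (if m = m1 then cnj z else 1) else 1)"
  by (rule ext) (simp add: psi_def)

lemma int_psi: "(\<integral>z. psi s k i m0 m1 (m,j) z \<partial>CN01) =
   (if j = k then (\<integral>z. ee s z * (if m = m0 then cnj z else 1) * (if m = m1 then z else 1) \<partial>CN01)
    else if j = i then (\<integral>z. (if m = m0 then z else 1) * (if m = m1 then cnj z else 1) \<partial>CN01) else 1)"
  by (cases "j = k"; cases "j = i") (simp_all add: psi_fun CN_one)

lemma E1:
  assumes s: "s \<ge> 0" and k: "k \<in> {1..K}"
  shows "integrable (channel_measure M K) (\<lambda>H. exp (- (s * WW M k H)))"
        "(\<integral>H. exp (- (s * WW M k H)) \<partial>channel_measure M K) = 1 / (1+s) ^ M"
proof -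
  let ?I = "{1..M}\<times>{1..K}"
  have eq: "(\<lambda>H. complex_of_real (exp (- (s * WW M k H)))) = (\<lambda>H. \<Prod>p\<in>?I. psi0 s k p (H p))"
    using P0_point[OF k] by simp
  have ic: "integrable (channel_measure M K) (\<lambda>H. complex_of_real (exp (- (s * WW M k H))))"
    unfolding eq channel_measure_def by (rule PiCN) (auto intro: psi0_int s)
  from integrable_Re[OF ic] show "integrable (channel_measure M K) (\<lambda>H. exp (- (s * WW M k H)))" by simp
  have "complex_of_real (\<integral>H. exp (- (s * WW M k H)) \<partial>channel_measure M K) =
        (\<Prod>p\<in>?I. \<integral>z. psi0 s k p z \<partial>CN01)"
    unfolding integral_complex_of_real[symmetric] eq channel_measure_def
    by (rule PiCN) (auto intro: psi0_int s)
  also have "\<dots> = (\<Prod>m\<in>{1..M}. \<Prod>j\<in>{1..K}. if j = k then complex_of_real (1 / (1+s)) else 1)"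
    unfolding prod_AB by (intro prod.cong refl) (simp only: int_psi0 s)
  also have "\<dots> = complex_of_real (1 / (1+s) ^ M)"
    using k by (simp add: power_one_over)
  finally show "(\<integral>H. exp (- (s * WW M k H)) \<partial>channel_measure M K) = 1 / (1+s) ^ M"
    using of_real_eq_iff by blast
qed

lemma E2:
  assumes s: "s \<ge> 0" and k: "k \<in> {1..K}" and i: "i \<in> {1..K}" and ki: "k \<noteq> i"
  shows "integrable (channel_measure M K) (\<lambda>H. (cmod (AA M k i H))\<^sup>2 * exp (- (s * WW M k H)))"
        "(\<integral>H. (cmod (AA M k i H))\<^sup>2 * exp (- (s * WW M k H)) \<partial>channel_measure M K) = real M / (1+s) ^ (M+1)"
proof -
  let ?I = "{1..M}\<times>{1..K}"
  let ?Q = "\<lambda>m0 m1 H. \<Prod>p\<in>?I. psi s k i m0 m1 p (H p)"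
  have eq: "(\<lambda>H. complex_of_real ((cmod (AA M k i H))\<^sup>2 * exp (- (s * WW M k H)))) =
            (\<lambda>H. \<Sum>m0\<in>{1..M}. \<Sum>m1\<in>{1..M}. ?Q m0 m1 H)"
  proof
    fix H
    have "complex_of_real ((cmod (AA M k i H))\<^sup>2 * exp (- (s * WW M k H))) =
       complex_of_real (exp (- (s * WW M k H))) * (AA M k i H * cnj (AA M k i H))"
      by (simp add: complex_norm_square[symmetric] mult.commute)
    also have "\<dots> = (\<Sum>m0\<in>{1..M}. \<Sum>m1\<in>{1..M}. complex_of_real (exp (- (s * WW M k H))) *
          (cnj (H (m0,k)) * H (m0,i)) * (H (m1,k) * cnj (H (m1,i))))"
    proof -
      have "complex_of_real (exp (- (s * WW M k H))) * (AA M k i H * cnj (AA M k i H)) =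
        complex_of_real (exp (- (s * WW M k H))) * (\<Sum>m0\<in>{1..M}. \<Sum>m1\<in>{1..M}. (cnj (H (m0,k)) * H (m0,i)) * cnj (cnj (H (m1,k)) * H (m1,i)))"
        by (simp only: AA_def cnj_sum sum_product)
      also have "\<dots> = (\<Sum>m0\<in>{1..M}. \<Sum>m1\<in>{1..M}. complex_of_real (exp (- (s * WW M k H))) * ((cnj (H (m0,k)) * H (m0,i)) * cnj (cnj (H (m1,k)) * H (m1,i))))"
        by (simp only: sum_distrib_left)
      finally show ?thesis by (simp add: mult.assoc)
    qed
    also have "\<dots> = (\<Sum>m0\<in>{1..M}. \<Sum>m1\<in>{1..M}. ?Q m0 m1 H)"
      by (intro sum.cong refl, subst P_point[OF k i ki]) auto
    finally show "complex_of_real ((cmod (AA M k i H))\<^sup>2 * exp (- (s * WW M k H))) =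
            (\<Sum>m0\<in>{1..M}. \<Sum>m1\<in>{1..M}. ?Q m0 m1 H)" .
  qed
  have iQ: "integrable (channel_measure M K) (?Q m0 m1)" for m0 m1
    unfolding channel_measure_def by (rule PiCN) (auto intro: psi_int s)
  have ic: "integrable (channel_measure M K) (\<lambda>H. complex_of_real ((cmod (AA M k i H))\<^sup>2 * exp (- (s * WW M k H))))"
    unfolding eq by (intro Bochner_Integration.integrable_sum iQ)
  from integrable_Re[OF ic] show "integrable (channel_measure M K) (\<lambda>H. (cmod (AA M k i H))\<^sup>2 * exp (- (s * WW M k H)))" by simp
  have intQ: "(\<integral>H. ?Q m0 m1 H \<partial>channel_measure M K) =
      (if m0 = m1 then complex_of_real (1 / (1+s) ^ (M+1)) else 0)"
    if m0: "m0 \<in> {1..M}" and m1: "m1 \<in> {1..M}" for m0 m1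
  proof -
    let ?X = "\<lambda>m. \<integral>z. ee s z * (if m = m0 then cnj z else 1) * (if m = m1 then z else 1) \<partial>CN01"
    let ?Y = "\<lambda>m. \<integral>z. (if m = m0 then z else 1) * (if m = m1 then cnj z else 1) \<partial>CN01"
    have "(\<integral>H. ?Q m0 m1 H \<partial>channel_measure M K) = (\<Prod>p\<in>?I. \<integral>z. psi s k i m0 m1 p z \<partial>CN01)"
      unfolding channel_measure_def by (rule PiCN) (auto intro: psi_int s)
    also have "\<dots> = (\<Prod>m\<in>{1..M}. \<Prod>j\<in>{1..K}. if j = k then ?X m else if j = i then ?Y m else 1)"
      unfolding prod_AB by (intro prod.cong refl) (simp only: int_psi)
    also have "\<dots> = (\<Prod>m\<in>{1..M}. ?X m * ?Y m)"
      using k i ki by (simp add: prod_two)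
    also have "\<dots> = (if m0 = m1 then complex_of_real (1 / (1+s) ^ (M+1)) else 0)"
    proof (cases "m0 = m1")
      case True
      have "(\<Prod>m\<in>{1..M}. ?X m * ?Y m) = (\<Prod>m\<in>{1..M}. if m = m0 then complex_of_real (1 / (1+s)\<^sup>2) else complex_of_real (1 / (1+s)))"
        using True s by (intro prod.cong refl) (auto simp: int_ee int_ee2 int_zz int_one CN_one)
      also have "\<dots> = complex_of_real (1 / (1+s)\<^sup>2) * complex_of_real (1 / (1+s)) ^ (M - 1)"
        using m0 by (simp add: prod_one_other)
      also have "\<dots> = complex_of_real (1 / (1+s) ^ (M+1))"
      proof -
        have "M \<ge> 1" using m0 by simp
        then have "M+1 = 2 + (M-1)" by simp
        then have "(1+s) ^ (M+1) = (1+s)\<^sup>2 * (1+s) ^ (M-1)"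
          by (simp only: power_add)
        then show ?thesis by (simp add: power_one_over)
      qed
      finally show ?thesis using True by simp
    next
      case False
      have "?Y m0 = 0" using False by (simp add: int_z)
      then have "(\<Prod>m\<in>{1..M}. ?X m * ?Y m) = 0"
        using m0 by (intro prod_zero) (auto intro!: bexI[of _ m0])
      then show ?thesis using False by simp
    qed
    finally show ?thesis .
  qed
  have "complex_of_real (\<integral>H. (cmod (AA M k i H))\<^sup>2 * exp (- (s * WW M k H)) \<partial>channel_measure M K) =
        (\<Sum>m0\<in>{1..M}. \<Sum>m1\<in>{1..M}. \<integral>H. ?Q m0 m1 H \<partial>channel_measure M K)"
  proof -
    have "complex_of_real (\<integral>H. (cmod (AA M k i H))\<^sup>2 * exp (- (s * WW M k H)) \<partial>channel_measure M K) =
       (\<integral>H. (\<Sum>m0\<in>{1..M}. \<Sum>m1\<in>{1..M}. ?Q m0 m1 H) \<partial>channel_measure M K)"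
      unfolding integral_complex_of_real[symmetric] eq ..
    also have "\<dots> = (\<Sum>m0\<in>{1..M}. \<integral>H. (\<Sum>m1\<in>{1..M}. ?Q m0 m1 H) \<partial>channel_measure M K)"
      by (rule Bochner_Integration.integral_sum) (intro Bochner_Integration.integrable_sum iQ)
    also have "\<dots> = (\<Sum>m0\<in>{1..M}. \<Sum>m1\<in>{1..M}. \<integral>H. ?Q m0 m1 H \<partial>channel_measure M K)"
      by (intro sum.cong refl Bochner_Integration.integral_sum iQ)
    finally show ?thesis .
  qed
  also have "\<dots> = (\<Sum>m0\<in>{1..M}. \<Sum>m1\<in>{1..M}. if m0 = m1 then complex_of_real (1 / (1+s) ^ (M+1)) else 0)"
    by (intro sum.cong refl, rule intQ) auto
  also have "\<dots> = complex_of_real (real M / (1+s) ^ (M+1))"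
    by simp
  finally show "(\<integral>H. (cmod (AA M k i H))\<^sup>2 * exp (- (s * WW M k H)) \<partial>channel_measure M K) = real M / (1+s) ^ (M+1)"
    using of_real_eq_iff by blast
qed


lemma cc2: "(1 / real (m+2)) * ((1 + of_nat (Suc m)) * (- (u * 1 * u) * u ^ Suc m)) = - ((u::real) ^ (m+3))"
proof -
  have "(1 / real (m+2)) * (1 + of_nat (Suc m)) = 1" by (simp add: field_simps)
  moreover have "(- (u * 1 * u) * u ^ Suc m) = - (u ^ (m+3))" by (simp add: power_add power2_eq_square numeral_3_eq_3 algebra_simps)
  ultimately show ?thesis by (metis mult.assoc mult_1)
qed

lemma cc3: "(u::real) ^ (m+2) * (u * x) = u ^ (m+3) * x"
  by (simp add: power_add power3_eq_cube power2_eq_square ac_simps)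

lemma FTC_pow:
  fixes m :: nat
  shows "(\<integral>\<^sup>+s. ennreal (s / (1+s) ^ (m+3)) * indicator {0..} s \<partial>lborel) = ennreal (1 / (real (m+1) * real (m+2)))"
proof -
  define F where "F s = - (1 / real (m+1)) * (inverse (1+s)) ^ (m+1) + (1 / real (m+2)) * (inverse (1+s)) ^ (m+2)" for s :: real
  have d: "DERIV F s :> s / (1+s) ^ (m+3)" if s: "0 \<le> s" for s
  proof -
    have p: "1 + s \<noteq> 0" using s by simp
    let ?u = "inverse (1+s)"
    have hu: "?u * (1+s) = 1" using p by simp
    have d0: "DERIV (\<lambda>s. 1 + s) s :> 1" by (auto intro!: derivative_eq_intros)
    have du: "DERIV (\<lambda>s. inverse (1 + s)) s :> - (?u * 1 * ?u)"
      using DERIV_inverse'[OF d0] p by simp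
    have d1: "DERIV (\<lambda>s. - (1 / real (m+1)) * (inverse (1+s)) ^ Suc m) s :>
              - (1 / real (m+1)) * ((1 + of_nat m) * (- (?u * 1 * ?u) * ?u ^ m))"
      by (rule DERIV_cmult[OF DERIV_power_Suc[OF du]])
    have d2: "DERIV (\<lambda>s. (1 / real (m+2)) * (inverse (1+s)) ^ Suc (Suc m)) s :>
              (1 / real (m+2)) * ((1 + of_nat (Suc m)) * (- (?u * 1 * ?u) * ?u ^ Suc m))"
      by (rule DERIV_cmult[OF DERIV_power_Suc[OF du]])
    have c1: "- (1 / real (m+1)) * ((1 + of_nat m) * (- (?u * 1 * ?u) * ?u ^ m)) = ?u ^ (m+2)"
      by (simp add: field_simps power2_eq_square)
    have c2: "(1 / real (m+2)) * ((1 + of_nat (Suc m)) * (- (?u * 1 * ?u) * ?u ^ Suc m)) = - (?u ^ (m+3))"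
      by (rule cc2)
    have c3: "?u ^ (m+2) = ?u ^ (m+3) * (1+s)"
    proof -
      have "?u ^ (m+2) = ?u ^ (m+2) * (?u * (1+s))" using hu by simp
      also have "\<dots> = ?u ^ (m+3) * (1+s)" by (rule cc3)
      finally show ?thesis .
    qed
    have c4: "?u ^ (m+3) = inverse ((1+s) ^ (m+3))" by (simp add: power_inverse)
    have "DERIV F s :> - (1 / real (m+1)) * ((1 + of_nat m) * (- (?u * 1 * ?u) * ?u ^ m)) +
              (1 / real (m+2)) * ((1 + of_nat (Suc m)) * (- (?u * 1 * ?u) * ?u ^ Suc m))"
      unfolding F_def[abs_def] using DERIV_add[OF d1 d2] by simp
    moreover have "- (1 / real (m+1)) * ((1 + of_nat m) * (- (?u * 1 * ?u) * ?u ^ m)) +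
              (1 / real (m+2)) * ((1 + of_nat (Suc m)) * (- (?u * 1 * ?u) * ?u ^ Suc m)) = s / (1+s) ^ (m+3)"
      unfolding c1 c2 c3 c4 by (simp add: algebra_simps divide_inverse)
    ultimately show ?thesis by simp
  qed
  have lim: "(F \<longlongrightarrow> 0) at_top"
  proof -
    have u0: "((\<lambda>s::real. inverse (1+s)) \<longlongrightarrow> 0) at_top" by real_asymp
    have "((\<lambda>s. - (1 / real (m+1)) * (inverse (1+s)) ^ (m+1) + (1 / real (m+2)) * (inverse (1+s)) ^ (m+2))
       \<longlongrightarrow> - (1 / real (m+1)) * 0 ^ (m+1) + (1 / real (m+2)) * 0 ^ (m+2)) at_top"
      by (intro tendsto_intros u0)
    then show ?thesis unfolding F_def[abs_def] by simp
  qed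
  have "(\<integral>\<^sup>+s. ennreal (s / (1+s) ^ (m+3)) * indicator {0..} s \<partial>lborel) = ennreal (0 - F 0)"
    by (rule nn_integral_FTC_atLeast[OF _ d _ lim]) auto
  also have "0 - F 0 = 1 / (real (m+1) * real (m+2))"
    by (simp add: F_def field_simps)
  finally show ?thesis .
qed

lemma lap2:
  fixes w :: real assumes w: "w > 0"
  shows "(\<integral>\<^sup>+s. ennreal (s * exp (- (s * w))) * indicator {0..} s \<partial>lborel) = ennreal (1 / w\<^sup>2)"
proof -
  have "(\<integral>\<^sup>+ x. ennreal (erlang_density 0 w x * x ^ 1) \<partial>lborel) = ennreal w * (\<integral>\<^sup>+s. ennreal (s * exp (- (s * w))) * indicator {0..} s \<partial>lborel)"
    by (subst nn_integral_cmult[symmetric]) (auto intro!: nn_integral_cong simp: erlang_density_def ennreal_mult'[symmetric] mult_ac w less_imp_le split: split_indicator)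
  moreover have "(\<integral>\<^sup>+ x. ennreal (erlang_density 0 w x * x ^ 1) \<partial>lborel) = ennreal (1 / w)"
    using nn_integral_erlang_ith_moment[OF w, of 0 1] by simp
  ultimately have e: "ennreal w * (\<integral>\<^sup>+s. ennreal (s * exp (- (s * w))) * indicator {0..} s \<partial>lborel) = ennreal (1 / w)"
    by simp
  have "(\<integral>\<^sup>+s. ennreal (s * exp (- (s * w))) * indicator {0..} s \<partial>lborel) =
        ennreal (1/w) * (ennreal w * (\<integral>\<^sup>+s. ennreal (s * exp (- (s * w))) * indicator {0..} s \<partial>lborel))"
    using w by (simp add: mult.assoc[symmetric] ennreal_mult''[symmetric])
  also have "\<dots> = ennreal (1 / w\<^sup>2)" unfolding e using w by (simp add: ennreal_mult''[symmetric] power2_eq_square)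
  finally show ?thesis .
qed

lemma lap0:
  "(\<integral>\<^sup>+s. ennreal (s * exp (- (s * 0))) * indicator {0..} s \<partial>lborel) = \<top>"
proof (rule ccontr)
  let ?I = "(\<integral>\<^sup>+s. ennreal (s * exp (- (s * 0))) * indicator {0..} s \<partial>lborel)"
  assume "?I \<noteq> \<top>"
  then obtain r where r: "?I = ennreal r" "r \<ge> 0" by (cases ?I) auto
  define w where "w = 1 / (r + 1)"
  have w: "w > 0" using r by (simp add: w_def)
  have "ennreal (1 / w\<^sup>2) \<le> ?I"
    unfolding lap2[OF w, symmetric] using w
    by (intro nn_integral_mono) (auto simp: split: split_indicator intro!: ennreal_leI mult_left_le)
  then have "1 / w\<^sup>2 \<le> r" using r by (simp add: ennreal_le_iff)
  moreover have "1 / w\<^sup>2 = (r+1)\<^sup>2" by (simp add: w_def power_one_over)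
  moreover have "(r+1)\<^sup>2 > r"
  proof -
    have "0 \<le> r * r" using r by simp
    moreover have "(r+1)\<^sup>2 = r * r + 2 * r + 1" by (simp add: power2_eq_square algebra_simps)
    ultimately show ?thesis using r by linarith
  qed
  ultimately show False by simp
qed


definition IW :: "real \<Rightarrow> ennreal" where
  "IW w = (\<integral>\<^sup>+s. ennreal (s * exp (- (s * w))) * indicator {0..} s \<partial>lborel)"

lemma IW_pos: "w > 0 \<Longrightarrow> IW w = ennreal (1 / w\<^sup>2)"
  unfolding IW_def by (rule lap2)

lemma IW_zero: "IW 0 = \<top>"
  unfolding IW_def using lap0 .

lemma mu_prob: "prob_space (channel_measure M K)"
  unfolding channel_measure_def by (rule prob_space_PiM) (rule CN01_prob)

lemma comp_meas:
  assumes "p \<in> {1..M}\<times>{1..K}"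
  shows "(\<lambda>H. H p) \<in> borel_measurable (channel_measure M K)"
proof -
  have "(\<lambda>H. H p) \<in> measurable (channel_measure M K) CN01"
    unfolding channel_measure_def by (rule measurable_component_singleton) (rule assms)
  moreover have eq: "channel_measure M K \<rightarrow>\<^sub>M CN01 = borel_measurable (channel_measure M K)"
    by (rule measurable_cong_sets[OF refl sets_CN01])
  ultimately show ?thesis by (simp only: eq)
qed

lemma WW_meas:
  assumes k: "k \<in> {1..K}"
  shows "WW M k \<in> borel_measurable (channel_measure M K)"
proof -
  have e: "WW M k = (\<lambda>H. \<Sum>m\<in>{1..M}. (cmod (H (m,k)))\<^sup>2)" by (rule ext) (simp add: WW_def)
  show ?thesis unfolding e
  proof (rule borel_measurable_sum)
    fix m assume "m \<in> {1..M}"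
    then have [measurable]: "(\<lambda>H. H (m,k)) \<in> borel_measurable (channel_measure M K)"
      using k by (intro comp_meas) auto
    show "(\<lambda>H. (cmod (H (m,k)))\<^sup>2) \<in> borel_measurable (channel_measure M K)" by measurable
  qed
qed

lemma AA_meas:
  assumes k: "k \<in> {1..K}" and i: "i \<in> {1..K}"
  shows "AA M k i \<in> borel_measurable (channel_measure M K)"
proof -
  have e: "AA M k i = (\<lambda>H. \<Sum>m\<in>{1..M}. cnj (H (m,k)) * H (m,i))" by (rule ext) (simp add: AA_def)
  show ?thesis unfolding e
  proof (rule borel_measurable_sum)
    fix m assume "m \<in> {1..M}"
    then have [measurable]: "(\<lambda>H. H (m,k)) \<in> borel_measurable (channel_measure M K)"
      "(\<lambda>H. H (m,i)) \<in> borel_measurable (channel_measure M K)"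
      using k i by (auto intro!: comp_meas)
    show "(\<lambda>H. cnj (H (m,k)) * H (m,i)) \<in> borel_measurable (channel_measure M K)" by measurable
  qed
qed

lemma pair_mu: "pair_sigma_finite lborel (channel_measure M K)"
  by (simp add: pair_sigma_finite_def sigma_finite_lborel mu_prob prob_space_imp_sigma_finite)

lemma nn_eq_int:
  fixes g :: "_ \<Rightarrow> real"
  assumes "integrable N g" "\<And>x. 0 \<le> g x" "integral\<^sup>L N g = c"
  shows "(\<integral>\<^sup>+x. ennreal (g x) \<partial>N) = ennreal c"
  using nn_integral_eq_integral[OF assms(1)] assms(2,3) by simp

lemma tonelli_IW:
  fixes g :: "_ \<Rightarrow> real"
  assumes k: "k \<in> {1..K}" and gm[measurable]: "g \<in> borel_measurable (channel_measure M K)" and g0: "\<And>H. 0 \<le> g H"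
    and inner: "\<And>s. s \<ge> 0 \<Longrightarrow> integrable (channel_measure M K) (\<lambda>H. g H * exp (- (s * WW M k H)))"
    and innerv: "\<And>s. s \<ge> 0 \<Longrightarrow> (\<integral>H. g H * exp (- (s * WW M k H)) \<partial>channel_measure M K) = h s"
    and hm[measurable]: "h \<in> borel_measurable borel"
  shows "(\<integral>\<^sup>+H. ennreal (g H) * IW (WW M k H) \<partial>channel_measure M K) =
         (\<integral>\<^sup>+s. ennreal (s * h s) * indicator {0..} s \<partial>lborel)"
proof -
  interpret pair_sigma_finite lborel "channel_measure M K" by (rule pair_mu)
  note WW_meas[OF k, measurable]
  have "(\<integral>\<^sup>+H. ennreal (g H) * IW (WW M k H) \<partial>channel_measure M K) =
        (\<integral>\<^sup>+H. (\<integral>\<^sup>+s. ennreal (g H * (s * exp (- (s * WW M k H)))) * indicator {0..} s \<partial>lborel) \<partial>channel_measure M K)"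
  proof (rule nn_integral_cong)
    fix H
    have "ennreal (g H) * IW (WW M k H) =
       (\<integral>\<^sup>+s. ennreal (g H) * (ennreal (s * exp (- (s * WW M k H))) * indicator {0..} s) \<partial>lborel)"
      unfolding IW_def by (rule nn_integral_cmult[symmetric]) measurable
    also have "\<dots> = (\<integral>\<^sup>+s. ennreal (g H * (s * exp (- (s * WW M k H)))) * indicator {0..} s \<partial>lborel)"
      using g0 by (intro nn_integral_cong) (auto simp: ennreal_mult' split: split_indicator)
    finally show "ennreal (g H) * IW (WW M k H) =
       (\<integral>\<^sup>+s. ennreal (g H * (s * exp (- (s * WW M k H)))) * indicator {0..} s \<partial>lborel)" .
  qed
  also have "\<dots> = (\<integral>\<^sup>+s. (\<integral>\<^sup>+H. ennreal (g H * (s * exp (- (s * WW M k H)))) * indicator {0..} s \<partial>channel_measure M K) \<partial>lborel)"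
    by (rule Fubini') measurable
  also have "\<dots> = (\<integral>\<^sup>+s. ennreal (s * h s) * indicator {0..} s \<partial>lborel)"
  proof (rule nn_integral_cong)
    fix s :: real
    show "(\<integral>\<^sup>+H. ennreal (g H * (s * exp (- (s * WW M k H)))) * indicator {0..} s \<partial>channel_measure M K) =
          ennreal (s * h s) * indicator {0..} s"
    proof (cases "s \<ge> 0")
      case True
      have "(\<integral>\<^sup>+H. ennreal (g H * (s * exp (- (s * WW M k H)))) \<partial>channel_measure M K) = ennreal (s * h s)"
      proof (rule nn_eq_int)
        have "integrable (channel_measure M K) (\<lambda>H. s * (g H * exp (- (s * WW M k H))))"
          using inner[OF True] by (rule integrable_mult_right)
        then show "integrable (channel_measure M K) (\<lambda>H. g H * (s * exp (- (s * WW M k H))))"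
          by (simp add: ac_simps)
        show "\<And>H. 0 \<le> g H * (s * exp (- (s * WW M k H)))" using g0 True by simp
        have "(\<integral>H. g H * (s * exp (- (s * WW M k H))) \<partial>channel_measure M K) =
              (\<integral>H. s * (g H * exp (- (s * WW M k H))) \<partial>channel_measure M K)"
          by (simp add: ac_simps)
        also have "\<dots> = s * h s" using innerv[OF True] by simp
        finally show "(\<integral>H. g H * (s * exp (- (s * WW M k H))) \<partial>channel_measure M K) = s * h s" .
      qed
      then show ?thesis using True by simp
    next
      case False
      then show ?thesis by simp
    qed
  qed
  finally show ?thesis .
qed

lemma T1:
  assumes k: "k \<in> {1..K}" and M3: "M \<ge> 3"
  shows "(\<integral>\<^sup>+H. IW (WW M k H) \<partial>channel_measure M K) = ennreal (1 / ((real M - 1) * (real M - 2)))"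
proof -
  obtain m where m: "M = m + 3" using M3 by (metis add.commute le_add_diff_inverse)
  have "(\<integral>\<^sup>+H. IW (WW M k H) \<partial>channel_measure M K) = (\<integral>\<^sup>+H. ennreal 1 * IW (WW M k H) \<partial>channel_measure M K)"
    by simp
  also have "\<dots> = (\<integral>\<^sup>+s. ennreal (s * (1 / (1+s) ^ M)) * indicator {0..} s \<partial>lborel)"
    by (rule tonelli_IW[OF k]) (use E1[OF _ k] in auto)
  also have "\<dots> = (\<integral>\<^sup>+s. ennreal (s / (1+s) ^ (m+3)) * indicator {0..} s \<partial>lborel)"
    by (simp add: m)
  also have "\<dots> = ennreal (1 / (real (m+1) * real (m+2)))" by (rule FTC_pow)
  also have "\<dots> = ennreal (1 / ((real M - 1) * (real M - 2)))"
    by (simp add: m mult.commute)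
  finally show ?thesis .
qed

lemma T2:
  assumes k: "k \<in> {1..K}" and i: "i \<in> {1..K}" and ki: "k \<noteq> i" and M3: "M \<ge> 3"
  shows "(\<integral>\<^sup>+H. ennreal ((cmod (AA M k i H))\<^sup>2) * IW (WW M k H) \<partial>channel_measure M K) = ennreal (1 / (real M - 1))"
proof -
  obtain m where m: "M = m + 3" using M3 by (metis add.commute le_add_diff_inverse)
  note AA_meas[OF k i, measurable]
  have "(\<integral>\<^sup>+H. ennreal ((cmod (AA M k i H))\<^sup>2) * IW (WW M k H) \<partial>channel_measure M K) =
        (\<integral>\<^sup>+s. ennreal (s * (real M / (1+s) ^ (M+1))) * indicator {0..} s \<partial>lborel)"
    by (rule tonelli_IW[OF k]) (use E2[OF _ k i ki] in auto)
  also have "\<dots> = (\<integral>\<^sup>+s. ennreal (real M) * (ennreal (s / (1+s) ^ ((m+1)+3)) * indicator {0..} s) \<partial>lborel)"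
  proof (rule nn_integral_cong)
    fix s :: real
    show "ennreal (s * (real M / (1+s) ^ (M+1))) * indicator {0..} s =
          ennreal (real M) * (ennreal (s / (1+s) ^ ((m+1)+3)) * indicator {0..} s)"
    proof (cases "s \<ge> 0")
      case True
      have ind: "indicator {0..} s = (1::ennreal)" using True by simp
      have e1: "s * (real M / (1+s) ^ (M+1)) = real M * (s / (1+s) ^ ((m+1)+3))" by (simp add: m)
      have e2: "ennreal (real M * (s / (1+s) ^ ((m+1)+3))) = ennreal (real M) * ennreal (s / (1+s) ^ ((m+1)+3))"
        by (rule ennreal_mult) (use True in auto)
      show ?thesis unfolding ind e1 e2 by simp
    next
      case False
      then show ?thesis by simp
    qed
  qed
  also have "\<dots> = ennreal (real M) * (\<integral>\<^sup>+s. ennreal (s / (1+s) ^ ((m+1)+3)) * indicator {0..} s \<partial>lborel)"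
    by (rule nn_integral_cmult) measurable
  also have "\<dots> = ennreal (real M) * ennreal (1 / (real (m+1+1) * real (m+1+2)))" by (simp only: FTC_pow)
  also have "\<dots> = ennreal (real M * (1 / (real (m+1+1) * real (m+1+2))))"
    by (rule ennreal_mult[symmetric]) auto
  also have "real M * (1 / (real (m+1+1) * real (m+1+2))) = 1 / (real M - 1)"
  proof -
    have "0 \<le> real m * real m + real m * 5" by simp
    then have "6 + (real m * real m + real m * 5) \<noteq> 0" by linarith
    then show ?thesis by (simp add: m field_simps)
  qed
  finally show ?thesis .
qed


lemma ln_ge_1m: "q > 0 \<Longrightarrow> 1 - 1 / q \<le> ln (q::real)"
proof -
  assume q: "q > 0"
  have "ln (1/q) \<le> 1/q - 1" using q by (intro ln_le_minus_one) simp
  moreover have "ln (1/q) = - ln q" using q by (simp add: ln_div)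
  ultimately show ?thesis by simp
qed

lemma tang:
  fixes z c :: real assumes z: "z > 0" and c: "c > 0"
  shows "ln (1 + 1/c) - (z - c) / (c * (c+1)) \<le> ln (1 + 1/z)"
proof -
  define q where "q = (1 + 1/z) / (1 + 1/c)"
  have qpos: "q > 0" using z c by (simp add: q_def add_pos_pos)
  have p1: "1 + 1/z > 0" using z by (metis add_pos_pos divide_pos_pos zero_less_one)
  have p2: "1 + 1/c > 0" using c by (metis add_pos_pos divide_pos_pos zero_less_one)
  have "ln q = ln (1 + 1/z) - ln (1 + 1/c)" unfolding q_def using p1 p2 by (simp add: ln_div)
  then have lnq: "ln (1 + 1/z) = ln (1 + 1/c) + ln q" by simp
  have hz: "1 + 1/z \<noteq> 0" using p1 by simp
  have hc: "1 + 1/c \<noteq> 0" using p2 by simp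
  have "1 - 1/q = (c - z) / (c * (z+1))"
  proof -
    have hcz: "c + c * z \<noteq> 0" using z c by (metis add_pos_pos mult_pos_pos less_irrefl)
    show ?thesis using z c hz hc hcz by (simp add: q_def field_simps)
  qed
  moreover have "(c - z) / (c * (z+1)) \<ge> - ((z - c) / (c * (c+1)))"
  proof -
    have pp: "0 < c * (z+1) * (c * (c+1))" using z c by simp
    have "(c - z) / (c * (c+1)) \<le> (c - z) / (c * (z+1))"
    proof (cases "z \<le> c")
      case True
      then show ?thesis using pp by (intro divide_left_mono) (auto intro: mult_left_mono simp: c less_imp_le mult.commute)
    next
      case False
      then show ?thesis using pp by (intro divide_left_mono_neg) (auto intro: mult_left_mono simp: c less_imp_le mult.commute)
    qed
    moreover have "- ((z - c) / (c * (c+1))) = (c - z) / (c * (c+1))"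
      by (simp add: minus_divide_left)
    ultimately show ?thesis by linarith
  qed
  ultimately have "ln q \<ge> - ((z - c) / (c * (c+1)))" using ln_ge_1m[OF qpos] by linarith
  then show ?thesis using lnq by linarith
qed

lemma logbound:
  fixes N D a :: real
  assumes N: "N \<ge> 0" and D: "D \<ge> 1" and a: "a \<ge> 0" and Na: "N = a\<^sup>2"
  shows "0 \<le> log 2 (1 + N / D)" "log 2 (1 + N / D) \<le> 2 * a / ln 2"
proof -
  have nd: "0 \<le> N / D" using N D by simp
  then show "0 \<le> log 2 (1 + N / D)" by simp
  have "N / D \<le> N" using N D by (simp add: divide_le_eq mult_le_cancel_left1)
  then have "log 2 (1 + N / D) \<le> log 2 ((1 + a)\<^sup>2)"
    using nd a Na by (intro log_le_cancel_iff[THEN iffD2]) (auto simp: power2_eq_square algebra_simps)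
  also have "log 2 ((1 + a)\<^sup>2) = 2 * (ln (1 + a) / ln 2)"
    using a by (simp add: log_def ln_realpow)
  also have "\<dots> \<le> 2 * (a / ln 2)"
    using a by (intro mult_left_mono divide_right_mono ln_add_one_self_le_self) auto
  finally show "log 2 (1 + N / D) \<le> 2 * a / ln 2" by simp
qed


lemma lform_aux: "(d::real) \<noteq> 0 \<Longrightarrow> l \<noteq> 0 \<Longrightarrow> (x - (z - c) / d) / l = (x + c / d) / l - (1 / (d * l)) * z"
  by (simp add: field_simps)

lemma lint_aux: "(d::real) \<noteq> 0 \<Longrightarrow> l \<noteq> 0 \<Longrightarrow> (x + c / d) / l - (1 / (d * l)) * c = x / l"
  by (simp add: field_simps)

lemma final_alg:
  fixes P m1 m2 bk SB B Mr :: real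
  assumes "P > 0" "m1 > 0" "m2 > 0" "bk > 0" "SB \<ge> 0" "B > 0" "Mr > 0"
  shows "1 / (SB / (bk * m1) + 1 / (P / (Mr * B) * bk\<^sup>2 * m1 * m2)) = P * m1 * m2 * bk\<^sup>2 / (P * m2 * bk * SB + Mr * B)"
proof -
  have d: "P * m2 * bk * SB + Mr * B > 0" using assms by (intro add_nonneg_pos mult_nonneg_nonneg mult_pos_pos) auto
  have "SB / (bk * m1) + 1 / (P / (Mr * B) * bk\<^sup>2 * m1 * m2) = (P * m2 * bk * SB + Mr * B) / (P * m1 * m2 * bk\<^sup>2)"
    using assms by (simp add: field_simps power2_eq_square)
  then show ?thesis using d by simp
qed

lemma IW_meas[measurable]: "IW \<in> borel_measurable borel"
proof -
  have "(\<lambda>w. \<integral>\<^sup>+s. ennreal (s * exp (- (s * w))) * indicator {0..} s \<partial>lborel) \<in> borel_measurable borel"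
    by (rule lborel.borel_measurable_nn_integral) measurable
  then show ?thesis unfolding IW_def[abs_def] .
qed

lemma comp_sq_int:
  assumes q: "q \<in> {1..M}\<times>{1..K}"
  shows "integrable (channel_measure M K) (\<lambda>H. (cmod (H q))\<^sup>2)"
proof -
  interpret CN: prob_space CN01 by (rule CN01_prob)
  define f where "f p z = (if p = q then complex_of_real ((cmod z)\<^sup>2) else 1)" for p and z :: complex
  have fi: "integrable CN01 (f p)" for p
  proof (cases "p = q")
    case True
    have "f p = (\<lambda>z. complex_of_real ((cmod z)\<^sup>2))" using True by (auto simp: f_def)
    moreover have "integrable CN01 (\<lambda>z. (cmod z)\<^sup>2)" using C2(1)[of 0] by simp
    then have "integrable CN01 (\<lambda>z. complex_of_real ((cmod z)\<^sup>2))" by (rule integrable_of_real)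
    ultimately show ?thesis by (simp only:)
  next
    case False
    have "f p = (\<lambda>z. 1)" using False by (auto simp: f_def)
    then show ?thesis by simp
  qed
  have "integrable (channel_measure M K) (\<lambda>H. \<Prod>p\<in>{1..M}\<times>{1..K}. f p (H p))"
    unfolding channel_measure_def by (rule PiCN(1)) (auto intro: fi)
  moreover have "(\<lambda>H. \<Prod>p\<in>{1..M}\<times>{1..K}. f p (H p)) = (\<lambda>H. complex_of_real ((cmod (H q))\<^sup>2))"
    using q by (auto simp: f_def fun_eq_iff)
  ultimately have "integrable (channel_measure M K) (\<lambda>H. complex_of_real ((cmod (H q))\<^sup>2))" by simp
  from integrable_Re[OF this] show ?thesis by simp
qed

lemma WW_int:
  assumes k: "k \<in> {1..K}"
  shows "integrable (channel_measure M K) (WW M k)"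
proof -
  have e: "WW M k = (\<lambda>H. \<Sum>m\<in>{1..M}. (cmod (H (m,k)))\<^sup>2)" by (rule ext) (simp add: WW_def)
  show ?thesis unfolding e
    by (intro Bochner_Integration.integrable_sum comp_sq_int) (use k in auto)
qed

theorem proposition1:
  fixes M K k t :: nat and Pr :: real and \<beta> :: "nat \<Rightarrow> real"
  assumes "M \<ge> 3" and "K \<ge> 2" and "Pr > 0"
    and "\<And>i. i \<in> {1..K} \<Longrightarrow> \<beta> i > 0"
    and "k \<in> {1..K}" and "t \<in> {1..K-1}"
  shows "Rdl M K Pr \<beta> k t \<ge>
    log 2 (1 + (Pr * (real M - 1) * (real M - 2) * (\<beta> k)\<^sup>2) /
               (Pr * (real M - 2) * \<beta> k * (\<Sum>i\<in>Sset K k t. \<beta> i)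
                + real M * (\<Sum>i = 1..K. \<beta> i)))"
proof -
  let ?mu = "channel_measure M K"
  interpret P: prob_space ?mu by (rule mu_prob)
  have k: "k \<in> {1..K}" by fact
  define S where "S = Sset K k t"
  define B where "B = (\<Sum>i = 1..K. \<beta> i)"
  define \<rho> where "\<rho> = Pr / (real M * B)"
  define bk where "bk = \<beta> k"
  define SB where "SB = (\<Sum>i\<in>S. \<beta> i)"
  have bk: "bk > 0" using assms(4) k by (simp add: bk_def)
  have Bpos: "B > 0" unfolding B_def by (rule sum_pos) (use assms(2,4) in auto)
  have M3: "real M \<ge> 3" using assms(1) by simp
  have rho: "\<rho> > 0" unfolding \<rho>_def using assms(3) Bpos M3 by simp
  have Ssub: "i \<in> {1..K} \<and> i \<noteq> k" if "i \<in> S" for i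
    using that by (auto simp: S_def Sset_def)
  have Sfin: "finite S" by (rule finite_subset[of _ "{1..K}"]) (use Ssub in auto)
  have Sb: "\<beta> i > 0" if "i \<in> S" for i using Ssub[OF that] assms(4) by auto
  have SB0: "SB \<ge> 0" unfolding SB_def using Sb by (intro sum_nonneg) (auto intro: less_imp_le)
  define W where "W = WW M k"
  define A where "A i = AA M k i" for i
  define c where "c = SB / (bk * (real M - 1)) + 1 / (\<rho> * bk\<^sup>2 * (real M - 1) * (real M - 2))"
  have cpos: "c > 0" unfolding c_def using SB0 bk rho M3
    by (intro add_nonneg_pos divide_nonneg_pos divide_pos_pos mult_pos_pos) auto
  have W0: "W H \<ge> 0" for H unfolding W_def WW_def by (intro sum_nonneg) auto
  have gn: "gnorm2 M \<beta> H k = bk * W H" for H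
    using bk unfolding gnorm2_def gcol_def W_def WW_def bk_def
    by (simp add: norm_mult power_mult_distrib sum_distrib_left mult.commute)
  have gi: "(cmod (ginner M \<beta> H k i))\<^sup>2 = bk * \<beta> i * (cmod (A i H))\<^sup>2" if i: "i \<in> S" for H i
  proof -
    have "ginner M \<beta> H k i = complex_of_real (sqrt bk * sqrt (\<beta> i)) * A i H"
      unfolding ginner_def gcol_def A_def AA_def bk_def
      by (simp add: sum_distrib_left ac_simps)
    then show ?thesis using bk Sb[OF i] by (simp add: norm_mult power_mult_distrib)
  qed
  define N where "N H = \<rho> * (bk * W H)\<^sup>2" for H
  define D where "D H = \<rho> * (\<Sum>i\<in>S. bk * \<beta> i * (cmod (A i H))\<^sup>2) + 1" for H
  define F where "F H = log 2 (1 + N H / D H)" for H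
  have sumeq: "(\<Sum>i\<in>Sset K k t. (cmod (ginner M \<beta> H k i))\<^sup>2) = (\<Sum>i\<in>S. bk * \<beta> i * (cmod (A i H))\<^sup>2)" for H
    unfolding S_def[symmetric] by (intro sum.cong refl gi)
  have Rdl_eq: "Rdl M K Pr \<beta> k t = (\<integral>H. F H \<partial>?mu)"
    unfolding Rdl_def Let_def B_def[symmetric] \<rho>_def[symmetric] sumeq F_def N_def D_def gn ..
  have N0: "N H \<ge> 0" for H unfolding N_def using rho by simp
  have D1: "D H \<ge> 1" for H
  proof -
    have "0 \<le> \<rho> * (\<Sum>i\<in>S. bk * \<beta> i * (cmod (A i H))\<^sup>2)"
      using rho Sb bk by (intro mult_nonneg_nonneg sum_nonneg) (auto intro: less_imp_le)
    then show ?thesis unfolding D_def by simp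
  qed
  have Wm[measurable]: "W \<in> borel_measurable ?mu" unfolding W_def by (rule WW_meas[OF k])
  have Am: "A i \<in> borel_measurable ?mu" if "i \<in> S" for i
    unfolding A_def using Ssub[OF that] k by (intro AA_meas) auto
  have Dm[measurable]: "D \<in> borel_measurable ?mu"
  proof -
    have "(\<lambda>H. \<Sum>i\<in>S. bk * \<beta> i * (cmod (A i H))\<^sup>2) \<in> borel_measurable ?mu"
    proof (rule borel_measurable_sum)
      fix i assume i: "i \<in> S"
      note Am[OF i, measurable]
      show "(\<lambda>H. bk * \<beta> i * (cmod (A i H))\<^sup>2) \<in> borel_measurable ?mu" by measurable
    qed
    then show ?thesis unfolding D_def[abs_def] by measurable
  qed
  have Nm[measurable]: "N \<in> borel_measurable ?mu" unfolding N_def[abs_def] by measurable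
  define Z where "Z H = D H / N H" for H
  have Zm[measurable]: "Z \<in> borel_measurable ?mu" unfolding Z_def[abs_def] by measurable
  have Z0: "Z H \<ge> 0" for H unfolding Z_def using N0 D1 by (simp add: order_trans[OF zero_le_one])
  have Zeq: "Z H = (\<Sum>i\<in>S. (\<beta> i / bk) * ((cmod (A i H))\<^sup>2 * (1 / (W H)\<^sup>2))) + (1 / (\<rho> * bk\<^sup>2)) * (1 / (W H)\<^sup>2)"
    if WH: "W H > 0" for H
  proof -
    have nz: "\<rho> * (bk * W H)\<^sup>2 \<noteq> 0" using rho bk WH by simp
    have "Z H = (\<rho> * (\<Sum>i\<in>S. bk * \<beta> i * (cmod (A i H))\<^sup>2)) / (\<rho> * (bk * W H)\<^sup>2) + 1 / (\<rho> * (bk * W H)\<^sup>2)"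
      unfolding Z_def D_def N_def by (simp add: add_divide_distrib)
    also have "(\<rho> * (\<Sum>i\<in>S. bk * \<beta> i * (cmod (A i H))\<^sup>2)) / (\<rho> * (bk * W H)\<^sup>2) =
               (\<Sum>i\<in>S. (\<beta> i / bk) * ((cmod (A i H))\<^sup>2 * (1 / (W H)\<^sup>2)))"
      unfolding sum_distrib_left sum_divide_distrib
      using rho bk WH by (intro sum.cong refl) (simp add: field_simps power2_eq_square)
    also have "1 / (\<rho> * (bk * W H)\<^sup>2) = (1 / (\<rho> * bk\<^sup>2)) * (1 / (W H)\<^sup>2)"
      by (simp add: power_mult_distrib)
    finally show ?thesis .
  qed
  define Zb where "Zb H = (\<Sum>i\<in>S. ennreal (\<beta> i / bk) * (ennreal ((cmod (A i H))\<^sup>2) * IW (W H)))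
                        + ennreal (1 / (\<rho> * bk\<^sup>2)) * IW (W H)" for H
  have Zbm1: "(\<lambda>H. ennreal (\<beta> i / bk) * (ennreal ((cmod (A i H))\<^sup>2) * IW (W H))) \<in> borel_measurable ?mu"
    if i: "i \<in> S" for i
  proof -
    note Am[OF i, measurable]
    show ?thesis by measurable
  qed
  have T1': "(\<integral>\<^sup>+H. IW (W H) \<partial>?mu) = ennreal (1 / ((real M - 1) * (real M - 2)))"
    unfolding W_def by (rule T1[OF k assms(1)])
  have T2': "(\<integral>\<^sup>+H. ennreal ((cmod (A i H))\<^sup>2) * IW (W H) \<partial>?mu) = ennreal (1 / (real M - 1))"
    if i: "i \<in> S" for i
    unfolding W_def A_def using Ssub[OF i] by (intro T2[OF k _ _ assms(1)]) auto
  have intZb: "(\<integral>\<^sup>+H. Zb H \<partial>?mu) = ennreal c"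
  proof -
    have "(\<integral>\<^sup>+H. Zb H \<partial>?mu) = (\<integral>\<^sup>+H. (\<Sum>i\<in>S. ennreal (\<beta> i / bk) * (ennreal ((cmod (A i H))\<^sup>2) * IW (W H))) \<partial>?mu)
        + (\<integral>\<^sup>+H. ennreal (1 / (\<rho> * bk\<^sup>2)) * IW (W H) \<partial>?mu)"
      unfolding Zb_def by (rule nn_integral_add) (auto intro!: borel_measurable_sum Zbm1)
    also have "(\<integral>\<^sup>+H. (\<Sum>i\<in>S. ennreal (\<beta> i / bk) * (ennreal ((cmod (A i H))\<^sup>2) * IW (W H))) \<partial>?mu) =
        (\<Sum>i\<in>S. \<integral>\<^sup>+H. ennreal (\<beta> i / bk) * (ennreal ((cmod (A i H))\<^sup>2) * IW (W H)) \<partial>?mu)"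
      by (rule nn_integral_sum) (rule Zbm1)
    also have "\<dots> = (\<Sum>i\<in>S. ennreal (\<beta> i / bk) * ennreal (1 / (real M - 1)))"
    proof (rule sum.cong[OF refl])
      fix i assume i: "i \<in> S"
      note Am[OF i, measurable]
      show "(\<integral>\<^sup>+H. ennreal (\<beta> i / bk) * (ennreal ((cmod (A i H))\<^sup>2) * IW (W H)) \<partial>?mu) =
            ennreal (\<beta> i / bk) * ennreal (1 / (real M - 1))"
        by (subst nn_integral_cmult) (measurable, simp add: T2'[OF i])
    qed
    also have "\<dots> = ennreal (\<Sum>i\<in>S. \<beta> i / bk * (1 / (real M - 1)))"
    proof -
      have "(\<Sum>i\<in>S. ennreal (\<beta> i / bk) * ennreal (1 / (real M - 1))) = (\<Sum>i\<in>S. ennreal (\<beta> i / bk * (1 / (real M - 1))))"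
      proof (intro sum.cong refl ennreal_mult[symmetric])
        fix i assume "i \<in> S"
        then show "0 \<le> \<beta> i / bk" using Sb[of i] bk by simp
        show "0 \<le> 1 / (real M - 1)" using M3 by simp
      qed
      also have "\<dots> = ennreal (\<Sum>i\<in>S. \<beta> i / bk * (1 / (real M - 1)))"
      proof (rule sum_ennreal)
        fix i assume "i \<in> S"
        then show "0 \<le> \<beta> i / bk * (1 / (real M - 1))" using Sb[of i] bk M3 by simp
      qed
      finally show ?thesis .
    qed
    also have "(\<integral>\<^sup>+H. ennreal (1 / (\<rho> * bk\<^sup>2)) * IW (W H) \<partial>?mu) = ennreal (1 / (\<rho> * bk\<^sup>2)) * ennreal (1 / ((real M - 1) * (real M - 2)))"
      by (subst nn_integral_cmult) (measurable, simp add: T1')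
    also have "\<dots> = ennreal (1 / (\<rho> * bk\<^sup>2) * (1 / ((real M - 1) * (real M - 2))))"
      using rho bk M3 by (intro ennreal_mult[symmetric]) auto
    also have "ennreal (\<Sum>i\<in>S. \<beta> i / bk * (1 / (real M - 1))) + ennreal (1 / (\<rho> * bk\<^sup>2) * (1 / ((real M - 1) * (real M - 2)))) =
       ennreal ((\<Sum>i\<in>S. \<beta> i / bk * (1 / (real M - 1))) + 1 / (\<rho> * bk\<^sup>2) * (1 / ((real M - 1) * (real M - 2))))"
      using Sb bk M3 rho by (intro ennreal_plus[symmetric] sum_nonneg) (auto intro!: less_imp_le)
    also have "(\<Sum>i\<in>S. \<beta> i / bk * (1 / (real M - 1))) + 1 / (\<rho> * bk\<^sup>2) * (1 / ((real M - 1) * (real M - 2))) = c"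
      unfolding c_def SB_def sum_distrib_right[symmetric] sum_divide_distrib[symmetric]
      using bk M3 rho by (simp add: field_simps)
    finally show ?thesis .
  qed
  have AEW: "AE H in ?mu. W H > 0"
  proof -
    have "AE H in ?mu. IW (W H) \<noteq> \<infinity>"
      by (rule nn_integral_PInf_AE) (measurable, simp add: T1')
    then show ?thesis
    proof (rule eventually_mono)
      fix H assume "IW (W H) \<noteq> \<infinity>"
      then have "W H \<noteq> 0" using IW_zero by auto
      then show "W H > 0" using W0[of H] by simp
    qed
  qed
  have AEZ: "AE H in ?mu. ennreal (Z H) = Zb H"
    using AEW
  proof (rule eventually_mono)
    fix H assume WH: "W H > 0"
    have tn: "0 \<le> (\<beta> i / bk) * ((cmod (A i H))\<^sup>2 * (1 / (W H)\<^sup>2))" if i: "i \<in> S" for i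
    proof -
      have "0 \<le> \<beta> i / bk" using Sb[OF i] bk by simp
      moreover have "0 \<le> (cmod (A i H))\<^sup>2 * (1 / (W H)\<^sup>2)" by simp
      ultimately show ?thesis by (rule mult_nonneg_nonneg)
    qed
    have s0: "0 \<le> (\<Sum>i\<in>S. (\<beta> i / bk) * ((cmod (A i H))\<^sup>2 * (1 / (W H)\<^sup>2)))"
      by (rule sum_nonneg) (rule tn)
    have s1: "0 \<le> (1 / (\<rho> * bk\<^sup>2)) * (1 / (W H)\<^sup>2)" using rho bk by simp
    have "ennreal (Z H) = ennreal (\<Sum>i\<in>S. (\<beta> i / bk) * ((cmod (A i H))\<^sup>2 * (1 / (W H)\<^sup>2))) + ennreal ((1 / (\<rho> * bk\<^sup>2)) * (1 / (W H)\<^sup>2))"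
      unfolding Zeq[OF WH] by (rule ennreal_plus[OF s0 s1])
    also have "ennreal (\<Sum>i\<in>S. (\<beta> i / bk) * ((cmod (A i H))\<^sup>2 * (1 / (W H)\<^sup>2))) =
       (\<Sum>i\<in>S. ennreal ((\<beta> i / bk) * ((cmod (A i H))\<^sup>2 * (1 / (W H)\<^sup>2))))"
      by (rule sum_ennreal[symmetric]) (rule tn)
    also have "\<dots> = (\<Sum>i\<in>S. ennreal (\<beta> i / bk) * (ennreal ((cmod (A i H))\<^sup>2) * IW (W H)))"
    proof (rule sum.cong[OF refl])
      fix i assume i: "i \<in> S"
      have a0: "0 \<le> \<beta> i / bk" using Sb[OF i] bk by simp
      have e1: "ennreal ((\<beta> i / bk) * ((cmod (A i H))\<^sup>2 * (1 / (W H)\<^sup>2))) =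
          ennreal (\<beta> i / bk) * ennreal ((cmod (A i H))\<^sup>2 * (1 / (W H)\<^sup>2))"
        by (rule ennreal_mult[OF a0]) simp
      have e2: "ennreal ((cmod (A i H))\<^sup>2 * (1 / (W H)\<^sup>2)) = ennreal ((cmod (A i H))\<^sup>2) * ennreal (1 / (W H)\<^sup>2)"
        by (rule ennreal_mult) simp_all
      show "ennreal ((\<beta> i / bk) * ((cmod (A i H))\<^sup>2 * (1 / (W H)\<^sup>2))) =
            ennreal (\<beta> i / bk) * (ennreal ((cmod (A i H))\<^sup>2) * IW (W H))"
        unfolding IW_pos[OF WH] e1 e2 ..
    qed
    also have "ennreal ((1 / (\<rho> * bk\<^sup>2)) * (1 / (W H)\<^sup>2)) = ennreal (1 / (\<rho> * bk\<^sup>2)) * IW (W H)"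
      unfolding IW_pos[OF WH] using rho bk by (intro ennreal_mult) auto
    finally show "ennreal (Z H) = Zb H" unfolding Zb_def .
  qed
  have nnZ: "(\<integral>\<^sup>+H. ennreal (Z H) \<partial>?mu) = ennreal c"
    using nn_integral_cong_AE[OF AEZ] intZb by simp
  have Zint: "integrable ?mu Z"
    by (rule integrableI_nn_integral_finite[OF Zm _ nnZ]) (simp add: Z0)
  have intZ: "(\<integral>H. Z H \<partial>?mu) = c"
    using integral_eq_nn_integral[OF Zm] nnZ Z0 cpos by simp
  have Fm[measurable]: "F \<in> borel_measurable ?mu" unfolding F_def[abs_def] by measurable
  have Fint: "integrable ?mu F"
  proof (rule Bochner_Integration.integrable_bound)
    show "integrable ?mu (\<lambda>H. (2 * sqrt \<rho> * bk / ln 2) * W H)"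
      unfolding W_def by (intro integrable_mult_right WW_int k)
    show "F \<in> borel_measurable ?mu" by measurable
    show "AE H in ?mu. norm (F H) \<le> norm ((2 * sqrt \<rho> * bk / ln 2) * W H)"
    proof (rule AE_I2)
      fix H
      have Na: "N H = (sqrt \<rho> * bk * W H)\<^sup>2" unfolding N_def using rho by (simp add: power_mult_distrib)
      have a0: "0 \<le> sqrt \<rho> * bk * W H" using rho bk W0 by simp
      note lb = logbound[OF N0 D1 a0 Na]
      have "norm (F H) = F H" unfolding F_def using lb(1) by simp
      also have "\<dots> \<le> 2 * (sqrt \<rho> * bk * W H) / ln 2" unfolding F_def by (rule lb(2))
      also have "\<dots> = (2 * sqrt \<rho> * bk / ln 2) * W H" by simp
      also have "\<dots> \<le> norm ((2 * sqrt \<rho> * bk / ln 2) * W H)" unfolding real_norm_def by (rule abs_ge_self)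
      finally show "norm (F H) \<le> norm ((2 * sqrt \<rho> * bk / ln 2) * W H)" .
    qed
  qed
  define L where "L H = (ln (1 + 1/c) - (Z H - c) / (c * (c+1))) / ln 2" for H
  have AEL: "AE H in ?mu. L H \<le> F H"
    using AEW
  proof (rule eventually_mono)
    fix H assume WH: "W H > 0"
    have Npos: "N H > 0" unfolding N_def using rho bk WH by simp
    have Dpos: "D H > 0" using D1[of H] by simp
    have Zpos: "Z H > 0" unfolding Z_def using Npos Dpos by simp
    have "N H / D H = 1 / Z H" unfolding Z_def by simp
    then have "F H = ln (1 + 1 / Z H) / ln 2" unfolding F_def log_def by simp
    moreover have "ln (1 + 1/c) - (Z H - c) / (c * (c+1)) \<le> ln (1 + 1 / Z H)"
      by (rule tang[OF Zpos cpos])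
    ultimately show "L H \<le> F H" unfolding L_def by (simp add: divide_right_mono)
  qed
  define \<alpha> where "\<alpha> = (ln (1 + 1/c) + c / (c * (c+1))) / ln 2"
  define \<gamma> where "\<gamma> = 1 / (c * (c+1) * ln 2)"
  have Lform: "L = (\<lambda>H. \<alpha> - \<gamma> * Z H)"
  proof
    fix H show "L H = \<alpha> - \<gamma> * Z H"
      unfolding L_def \<alpha>_def \<gamma>_def using cpos by (intro lform_aux) auto
  qed
  have Lint: "integrable ?mu L" unfolding Lform using Zint by simp
  have intL: "(\<integral>H. L H \<partial>?mu) = ln (1 + 1/c) / ln 2"
  proof -
    have "(\<integral>H. L H \<partial>?mu) = \<alpha> - \<gamma> * c"
      unfolding Lform using Zint intZ by (simp add: Bochner_Integration.integral_diff P.prob_space)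
    also have "\<dots> = ln (1 + 1/c) / ln 2" unfolding \<alpha>_def \<gamma>_def using cpos by (intro lint_aux) auto
    finally show ?thesis .
  qed
  have "ln (1 + 1/c) / ln 2 \<le> (\<integral>H. F H \<partial>?mu)"
    using integral_mono_AE[OF Lint Fint AEL] intL by simp
  moreover have "1 / c = (Pr * (real M - 1) * (real M - 2) * (\<beta> k)\<^sup>2) /
               (Pr * (real M - 2) * \<beta> k * (\<Sum>i\<in>Sset K k t. \<beta> i) + real M * (\<Sum>i = 1..K. \<beta> i))"
  proof -
    show ?thesis
      unfolding c_def \<rho>_def SB_def[symmetric] S_def[symmetric] B_def[symmetric] bk_def[symmetric]
      using M3 by (intro final_alg assms(3) bk SB0 Bpos) auto
  qed
  ultimately show ?thesis unfolding Rdl_eq log_def by simp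
qed


end
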